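(* Let $H$ be a connected $3$-regular multigraph embedded on a sphere. Then for every loop of $H$, one of the two open disks into which the loop separates the sphere is a face of $H$.
   Context: A loop contributes $2$ to the degree of its vertex and is embedded as a closed curve through its vertex. *)

theory Defs
  imports "HOL-Analysis.Analysis"
begin

text \<open>A finite multigraph (loops and parallel edges allowed): vertex set V, edge set E,
  each edge e has end vertices src e and tgt e; e is a loop iff src e = tgt e.\<close>

definition multigraph :: "'v set \<Rightarrow> 'e set \<Rightarrow> ('e \<Rightarrow> 'v) \<Rightarrow> ('e \<Rightarrow> 'v) \<Rightarrow> bool" where
  "multigraph V E src tgt \<longleftrightarrow> finite V \<and> finite E \<and> (\<forall>e\<in>E. src e \<in> V \<and> tgt e \<in> V)"

text \<open>Degree: a loop contributes 2 (it is counted once as src and once as tgt).\<close>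
definition mg_degree :: "'e set \<Rightarrow> ('e \<Rightarrow> 'v) \<Rightarrow> ('e \<Rightarrow> 'v) \<Rightarrow> 'v \<Rightarrow> nat" where
  "mg_degree E src tgt v = card {e\<in>E. src e = v} + card {e\<in>E. tgt e = v}"

definition mg_adj :: "'e set \<Rightarrow> ('e \<Rightarrow> 'v) \<Rightarrow> ('e \<Rightarrow> 'v) \<Rightarrow> 'v \<Rightarrow> 'v \<Rightarrow> bool" where
  "mg_adj E src tgt x y \<longleftrightarrow> (\<exists>e\<in>E. (src e = x \<and> tgt e = y) \<or> (src e = y \<and> tgt e = x))"

definition mg_connected :: "'v set \<Rightarrow> 'e set \<Rightarrow> ('e \<Rightarrow> 'v) \<Rightarrow> ('e \<Rightarrow> 'v) \<Rightarrow> bool" where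
  "mg_connected V E src tgt \<longleftrightarrow> V \<noteq> {} \<and> (\<forall>u\<in>V. \<forall>v\<in>V. (mg_adj E src tgt)\<^sup>*\<^sup>* u v)"

abbreviation S2 :: "(real^3) set" where "S2 \<equiv> sphere 0 1"

definition sphere_embedding ::
  "'v set \<Rightarrow> 'e set \<Rightarrow> ('e \<Rightarrow> 'v) \<Rightarrow> ('e \<Rightarrow> 'v) \<Rightarrow> ('v \<Rightarrow> real^3) \<Rightarrow> ('e \<Rightarrow> real \<Rightarrow> real^3) \<Rightarrow> bool" where
  "sphere_embedding V E src tgt pos crv \<longleftrightarrow>
     inj_on pos V \<and> pos ` V \<subseteq> S2 \<and>
     (\<forall>e\<in>E. path_image (crv e) \<subseteq> S2 \<and>
            pathstart (crv e) = pos (src e) \<and> pathfinish (crv e) = pos (tgt e) \<and>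
            (if src e = tgt e then simple_path (crv e) else arc (crv e)) \<and>
            (\<forall>t\<in>{0<..<1}. crv e t \<notin> pos ` V)) \<and>
     (\<forall>e\<in>E. \<forall>e'\<in>E. e \<noteq> e' \<longrightarrow> crv e ` {0<..<1} \<inter> crv e' ` {0<..<1} = {})"

definition drawing :: "'v set \<Rightarrow> 'e set \<Rightarrow> ('v \<Rightarrow> real^3) \<Rightarrow> ('e \<Rightarrow> real \<Rightarrow> real^3) \<Rightarrow> (real^3) set" where
  "drawing V E pos crv = pos ` V \<union> (\<Union>e\<in>E. path_image (crv e))"

definition faces :: "'v set \<Rightarrow> 'e set \<Rightarrow> ('v \<Rightarrow> real^3) \<Rightarrow> ('e \<Rightarrow> real \<Rightarrow> real^3) \<Rightarrow> (real^3) set set" where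
  "faces V E pos crv = components (S2 - drawing V E pos crv)"

end

theory Submission
  imports Defs
begin

lemma punct_homeo:
  assumes "a \<in> S2"
  shows "(S2 - {a}) homeomorphic (UNIV::complex set)"
proof -
  have "(S2 - {a}) homeomorphic {x::real^3. (axis 1 1) \<bullet> x = 0}"
    by (rule homeomorphic_punctured_sphere_hyperplane) (use assms in auto)
  also have "\<dots> homeomorphic (UNIV::complex set)"
    by (subst homeomorphic_affine_sets_eq) (auto simp: affine_hyperplane aff_dim_hyperplane)
  finally show ?thesis .
qed

lemma jordan_part:
  fixes c :: "real \<Rightarrow> real^3"
  assumes sp: "simple_path c" and lp: "pathfinish c = pathstart c" and CS: "path_image c \<subseteq> S2"
    and PS: "P \<subseteq> S2 - path_image c" and cP: "connected P" and aP: "a \<in> P"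
  shows "\<exists>D \<in> components (S2 - path_image c). D \<inter> P = {}"
proof -
  define C where "C = path_image c"
  define U where "U = S2 - C"
  have aS: "a \<in> S2" "a \<notin> C" using PS aP C_def by auto
  obtain h k where hom: "homeomorphism (S2 - {a}) (UNIV::complex set) h k"
    using punct_homeo[OF aS(1)] homeomorphic_def by blast
  have CSa: "C \<subseteq> S2 - {a}" using CS aS C_def by auto
  have hc: "continuous_on (S2 - {a}) h" "continuous_on UNIV k" "\<And>x. x \<in> S2 - {a} \<Longrightarrow> k (h x) = x"
    "k ` UNIV = S2 - {a}"
    using hom by (auto simp: homeomorphism_def)
  have hinj: "inj_on h (S2 - {a})" by (metis hc(3) inj_on_inverseI)
  have sp': "simple_path (h \<circ> c)"
    apply (rule simple_path_continuous_image[OF sp])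
    using hc(1) CSa C_def continuous_on_subset apply blast
    using hinj CSa C_def inj_on_subset apply blast done
  have lp': "pathfinish (h \<circ> c) = pathstart (h \<circ> c)"
    using lp by (simp add: pathfinish_def pathstart_def)
  obtain inner where inn: "inner \<noteq> {}" "open inner" "connected inner" "bounded inner"
     "inner \<inter> path_image (h \<circ> c) = {}" "frontier inner = path_image (h \<circ> c)"
    using Jordan_curve[OF sp' lp'] by (metis Int_commute Un_Int_eq(3) inf_compl_bot_right inf_sup_aci(1))
  define D where "D = k ` inner"
  have kh: "k ` path_image (h \<circ> c) = C"
    using hc(3) CSa by (force simp: path_image_compose C_def image_comp)
  have DU: "D \<subseteq> U"
  proof
    fix y assume "y \<in> D"
    then obtain x where x: "x \<in> inner" "y = k x" using D_def by auto
    have yS: "y \<in> S2 - {a}" using hc(4) x by (metis rangeI)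
    have "y \<notin> C"
    proof
      assume "y \<in> C"
      then have "h y \<in> path_image (h \<circ> c)" by (simp add: path_image_compose C_def)
      moreover have "h y = x" using hom x by (simp add: homeomorphism_def)
      ultimately show False using inn(5) x by auto
    qed
    then show "y \<in> U" using yS U_def by auto
  qed
  have aD: "a \<notin> D" using hc(4) D_def by auto
  have Dne: "D \<noteq> {}" using inn D_def by auto
  have cD: "connected D" unfolding D_def
    using connected_continuous_image[OF continuous_on_subset[OF hc(2)] inn(3)] by auto
  have oD0: "openin (top_of_set (S2 - {a})) D"
  proof -
    have "openin (top_of_set UNIV) inner" using inn(2) by simp
    from homeomorphism_imp_open_map[OF homeomorphism_symD[OF hom] this] show ?thesis
      unfolding D_def .
  qed
  have "openin (top_of_set S2) (S2 - {a})"
    by (simp add: openin_delete)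
  then have oD1: "openin (top_of_set S2) D" using oD0 openin_trans by blast
  obtain TO where TO: "open TO" "D = S2 \<inter> TO" using oD1 openin_open by blast
  have DUa: "D = U \<inter> TO" using TO DU U_def by auto
  then have oD: "openin (top_of_set U) D" using TO(1) openin_open_Int by blast
  obtain TC where TC: "closed TC" "D = U \<inter> TC"
  proof -
    have ck: "compact (closure inner)" using inn(4) compact_closure by blast
    then have "compact (k ` closure inner)"
      using compact_continuous_image continuous_on_subset hc(2) by blast
    then have clo: "closed (k ` closure inner)" by (simp add: compact_imp_closed)
    have "closure inner = inner \<union> frontier inner"
      using inn(2) by (simp add: closure_Un_frontier)
    then have "closure inner = inner \<union> path_image (h \<circ> c)" using inn(6) by simp
    then have "k ` closure inner = D \<union> C" using kh D_def by auto
    then have "D = U \<inter> k ` closure inner" using DU U_def by auto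
    then show ?thesis using clo that by blast
  qed
  have cl: "closedin (top_of_set U) D" using TC closedin_closed_Int by blast
  have Dcomp: "D \<in> components U"
    unfolding in_components_maximal
  proof (intro conjI allI impI)
    fix d assume d: "d \<noteq> {} \<and> D \<subseteq> d \<and> d \<subseteq> U \<and> connected d"
    have "openin (top_of_set d) D" using oD d openin_subset_trans by blast
    moreover have "closedin (top_of_set d) D" using cl d closedin_subset_trans by blast
    ultimately show "d = D" using d Dne connected_clopen by metis
  qed (use Dne DU cD in auto)
  have "P \<inter> D = {}"
  proof -
    have PU: "P \<subseteq> U" using PS U_def C_def by auto
    have "openin (top_of_set P) (P \<inter> TO)" using TO(1) openin_open_Int by blast
    moreover have "P \<inter> TO = P \<inter> D" using DUa PU by auto
    moreover have "closedin (top_of_set P) (P \<inter> TC)" using TC(1) closedin_closed_Int by blast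
    moreover have "P \<inter> TC = P \<inter> D" using TC(2) PU by auto
    ultimately have "openin (top_of_set P) (P \<inter> D)" "closedin (top_of_set P) (P \<inter> D)" by auto
    then have "P \<inter> D = {} \<or> P \<inter> D = P" using cP connected_clopen by blast
    then show ?thesis using aP aD by auto
  qed
  then show ?thesis using Dcomp U_def C_def by blast
qed

theorem lemma4p6:
  fixes V :: "'v set" and E :: "'e set" and src tgt :: "'e \<Rightarrow> 'v"
    and pos :: "'v \<Rightarrow> real^3" and crv :: "'e \<Rightarrow> real \<Rightarrow> real^3"
  assumes "multigraph V E src tgt"
    and "mg_connected V E src tgt"
    and "\<forall>v\<in>V. mg_degree E src tgt v = 3"
    and "sphere_embedding V E src tgt pos crv"
    and "e \<in> E" and "src e = tgt e"
  shows "\<exists>D\<in>components (S2 - path_image (crv e)). D \<in> faces V E pos crv"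
proof -
  note mg = assms(1)[unfolded multigraph_def]
  note emb = assms(4)[unfolded sphere_embedding_def]
  have inj: "inj_on pos V" and posS: "pos ` V \<subseteq> S2" using emb by auto
  have E1: "\<And>g. g \<in> E \<Longrightarrow> path_image (crv g) \<subseteq> S2 \<and>
            pathstart (crv g) = pos (src g) \<and> pathfinish (crv g) = pos (tgt g) \<and>
            (if src g = tgt g then simple_path (crv g) else arc (crv g)) \<and>
            (\<forall>t\<in>{0<..<1}. crv g t \<notin> pos ` V)" using emb by blast
  have E2: "\<And>g g'. g \<in> E \<Longrightarrow> g' \<in> E \<Longrightarrow> g \<noteq> g' \<Longrightarrow> crv g ` {0<..<1} \<inter> crv g' ` {0<..<1} = {}"
    using emb by blast
  have pathg: "\<And>g. g \<in> E \<Longrightarrow> path (crv g)"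
    using E1 by (metis arc_imp_path simple_path_imp_path)
  have st0: "\<And>g. g \<in> E \<Longrightarrow> crv g 0 = pos (src g)" and st1: "\<And>g. g \<in> E \<Longrightarrow> crv g 1 = pos (tgt g)"
    using E1 by (auto simp: pathstart_def pathfinish_def)
  have srcV: "\<And>g. g \<in> E \<Longrightarrow> src g \<in> V" and tgtV: "\<And>g. g \<in> E \<Longrightarrow> tgt g \<in> V" using mg by auto
  define v where "v = src e"
  have vV: "v \<in> V" using srcV assms(5) v_def by auto
  have te: "tgt e = v" using assms(6) v_def by simp
  define C where "C = path_image (crv e)"
  define A where "A = {g\<in>E. src g = v}"
  define B where "B = {g\<in>E. tgt g = v}"
  have finA: "finite A" "finite B" using mg A_def B_def by auto
  have eAB: "e \<in> A" "e \<in> B" using A_def B_def assms(5) v_def te by auto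
  have "card A + card B = 3" using assms(3) vV A_def B_def by (simp add: mg_degree_def)
  then have cd: "card (A - {e}) + card (B - {e}) = 1"
    using eAB finA by (simp add: card_Diff_singleton) (metis One_nat_def Suc_pred add_Suc add_Suc_right card_gt_0_iff diff_Suc_1 empty_iff eAB(1) eAB(2) finA numeral_3_eq_3 plus_1_eq_Suc)
  obtain f where f: "f \<in> E" "f \<noteq> e" "src f = v \<or> tgt f = v" "\<not> (src f = v \<and> tgt f = v)"
    and funi: "\<And>g. g \<in> E \<Longrightarrow> g \<noteq> e \<Longrightarrow> src g = v \<or> tgt g = v \<Longrightarrow> g = f"
  proof (cases "card (A - {e}) = 0")
    case True
    then have A0: "A - {e} = {}" using finA by simp
    have "card (B - {e}) = 1" using True cd by simp
    then obtain f where Bf: "B - {e} = {f}" using card_1_singletonE by blast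
    show ?thesis
      apply (rule that[of f])
      using Bf A0 unfolding A_def B_def by blast+
  next
    case False
    then have A1: "card (A - {e}) = 1" and "card (B - {e}) = 0" using cd by auto
    then have B0: "B - {e} = {}" using finA by simp
    obtain f where Af: "A - {e} = {f}" using A1 card_1_singletonE by blast
    show ?thesis
      apply (rule that[of f])
      using Af B0 unfolding A_def B_def by blast+
  qed
  have noloop: "\<And>g. g \<in> E \<Longrightarrow> g \<noteq> e \<Longrightarrow> src g \<noteq> v \<or> tgt g \<noteq> v"
    using funi f by blast
  define w where "w = (if src f = v then tgt f else src f)"
  have wV: "w \<in> V" using w_def srcV tgtV f(1) by auto
  have wv: "w \<noteq> v" using w_def f by auto
  have fends: "\<And>z. (src f = v \<and> tgt f = z) \<or> (src f = z \<and> tgt f = v) \<Longrightarrow> z = w"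
    using w_def f by auto
  have posvC: "pos v \<in> C" using E1[OF assms(5)] C_def v_def by (metis pathstart_in_path_image)
  have hit: "\<And>x s. x \<in> V \<Longrightarrow> s \<in> {0..1} \<Longrightarrow> pos x = crv e s \<Longrightarrow> x = v"
  proof -
    fix x s assume xs: "x \<in> V" "s \<in> {0..1}" "pos x = crv e s"
    have eint: "\<And>s. s \<in> {0<..<1} \<Longrightarrow> crv e s \<notin> pos ` V" using E1[OF assms(5)] by blast
    have "s \<notin> {0<..<1}" using eint xs by (metis image_eqI)
    then have "s = 0 \<or> s = 1" using xs(2) by auto
    then have "pos x = pos v" using xs(3) st0 st1 assms(5) v_def te by auto
    then show "x = v" using inj xs(1) vV by (simp add: inj_on_def)
  qed
  have geo: "\<And>g t. g \<in> E \<Longrightarrow> g \<noteq> e \<Longrightarrow> t \<in> {0..1} \<Longrightarrow> crv g t \<in> C \<Longrightarrow>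
      (t = 0 \<and> src g = v) \<or> (t = 1 \<and> tgt g = v)"
  proof -
    fix g t assume g: "g \<in> E" "g \<noteq> e" "t \<in> {0..1}" "crv g t \<in> C"
    obtain s where s: "s \<in> {0..1}" "crv g t = crv e s" using g(4) unfolding C_def path_image_def by auto
    have e0: "crv e 0 = pos v" "crv e 1 = pos v" using st0 st1 assms(5) v_def te by auto
    have eint: "\<And>s. s \<in> {0<..<1} \<Longrightarrow> crv e s \<notin> pos ` V" using E1[OF assms(5)] by blast
    have gint: "\<And>s. s \<in> {0<..<1} \<Longrightarrow> crv g s \<notin> pos ` V" using E1[OF g(1)] by blast
    consider "t \<in> {0<..<1}" | "t = 0" | "t = 1" using g(3) by fastforce
    then show "(t = 0 \<and> src g = v) \<or> (t = 1 \<and> tgt g = v)"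
    proof cases
      case 1
      consider "s \<in> {0<..<1}" | "s = 0" | "s = 1" using s(1) by fastforce
      then show ?thesis
      proof cases
        case 1
        then show ?thesis using \<open>t \<in> {0<..<1}\<close> E2[OF g(1) assms(5) g(2)] s(2) by blast
      next
        case 2
        then show ?thesis using \<open>t \<in> {0<..<1}\<close> gint s(2) e0 vV by auto
      next
        case 3
        then show ?thesis using \<open>t \<in> {0<..<1}\<close> gint s(2) e0 vV by auto
      qed
    next
      case 2
      have "crv g t = pos (src g)" using 2 st0 g(1) by simp
      then have "src g = v" using hit[OF srcV[OF g(1)] s(1)] s(2) by simp
      then show ?thesis using 2 by simp
    next
      case 3
      have "crv g t = pos (tgt g)" using 3 st1 g(1) by simp
      then have "tgt g = v" using hit[OF tgtV[OF g(1)] s(1)] s(2) by simp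
      then show ?thesis using 3 by simp
    qed
  qed
  have vertC: "\<And>u. u \<in> V \<Longrightarrow> u \<noteq> v \<Longrightarrow> pos u \<notin> C"
  proof
    fix u assume u: "u \<in> V" "u \<noteq> v" "pos u \<in> C"
    obtain s where s: "s \<in> {0..1}" "pos u = crv e s" using u(3) unfolding C_def path_image_def by auto
    have e0: "crv e 0 = pos v" "crv e 1 = pos v" using st0 st1 assms(5) v_def te by auto
    have eint: "\<And>s. s \<in> {0<..<1} \<Longrightarrow> crv e s \<notin> pos ` V" using E1[OF assms(5)] by blast
    show False using hit[OF u(1) s(1) s(2)] u(2) by simp
  qed
  define P where "P = drawing V E pos crv - C"
  have Ldraw: "\<And>g t. g \<in> E \<Longrightarrow> t \<in> {0..1} \<Longrightarrow> crv g t \<in> drawing V E pos crv"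
    unfolding drawing_def path_image_def by blast
  have L1: "\<And>g t. g \<in> E \<Longrightarrow> g \<noteq> e \<Longrightarrow> t \<in> {0..1} \<Longrightarrow> crv g t \<notin> C \<Longrightarrow> src g \<noteq> v \<Longrightarrow>
      crv g t \<in> connected_component_set P (pos (src g))"
  proof -
    fix g t assume g: "g \<in> E" "g \<noteq> e" "t \<in> {0..1}" "crv g t \<notin> C" "src g \<noteq> v"
    have sub: "crv g ` {0..t} \<subseteq> P"
    proof
      fix x assume "x \<in> crv g ` {0..t}"
      then obtain s where s: "s \<in> {0..t}" "x = crv g s" by auto
      have s01: "s \<in> {0..1}" using s g(3) by auto
      have "x \<notin> C"
      proof
        assume "x \<in> C"
        then have "(s = 0 \<and> src g = v) \<or> (s = 1 \<and> tgt g = v)" using geo g s01 s by blast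
        then have "s = 1" using g by auto
        then have "t = 1" using s g(3) by auto
        then show False using \<open>s = 1\<close> s g(4) \<open>x \<in> C\<close> by simp
      qed
      then show "x \<in> P" using Ldraw[OF g(1) s01] s P_def by auto
    qed
    have con: "connected (crv g ` {0..t})"
      using pathg[OF g(1)] g(3) unfolding path_def
      by (intro connected_continuous_image) (auto intro: continuous_on_subset)
    have "pos (src g) \<in> crv g ` {0..t}" using st0[OF g(1)] g(3) by (metis atLeastAtMost_iff image_eqI order_refl) 
    then have "crv g ` {0..t} \<subseteq> connected_component_set P (pos (src g))"
      by (rule connected_component_maximal[OF _ con sub])
    moreover have "crv g t \<in> crv g ` {0..t}" using g(3) by auto
    ultimately show "crv g t \<in> connected_component_set P (pos (src g))" by blast
  qed
  have L2: "\<And>g t. g \<in> E \<Longrightarrow> g \<noteq> e \<Longrightarrow> t \<in> {0..1} \<Longrightarrow> crv g t \<notin> C \<Longrightarrow> tgt g \<noteq> v \<Longrightarrow>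
      crv g t \<in> connected_component_set P (pos (tgt g))"
  proof -
    fix g t assume g: "g \<in> E" "g \<noteq> e" "t \<in> {0..1}" "crv g t \<notin> C" "tgt g \<noteq> v"
    have sub: "crv g ` {t..1} \<subseteq> P"
    proof
      fix x assume "x \<in> crv g ` {t..1}"
      then obtain s where s: "s \<in> {t..1}" "x = crv g s" by auto
      have s01: "s \<in> {0..1}" using s g(3) by auto
      have "x \<notin> C"
      proof
        assume "x \<in> C"
        then have "(s = 0 \<and> src g = v) \<or> (s = 1 \<and> tgt g = v)" using geo g s01 s by blast
        then have "s = 0" using g by auto
        then have "t = 0" using s g(3) by auto
        then show False using \<open>s = 0\<close> s g(4) \<open>x \<in> C\<close> by simp
      qed
      then show "x \<in> P" using Ldraw[OF g(1) s01] s P_def by auto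
    qed
    have con: "connected (crv g ` {t..1})"
      using pathg[OF g(1)] g(3) unfolding path_def
      by (intro connected_continuous_image) (auto intro: continuous_on_subset)
    have "pos (tgt g) \<in> crv g ` {t..1}" using st1[OF g(1)] g(3) by (metis atLeastAtMost_iff image_eqI order_refl) 
    then have "crv g ` {t..1} \<subseteq> connected_component_set P (pos (tgt g))"
      by (rule connected_component_maximal[OF _ con sub])
    moreover have "crv g t \<in> crv g ` {t..1}" using g(3) by auto
    ultimately show "crv g t \<in> connected_component_set P (pos (tgt g))" by blast
  qed
  define a where "a = pos w"
  define K where "K = connected_component_set P a"
  have aP: "a \<in> P" using a_def P_def vertC[OF wV wv] wV unfolding drawing_def by auto
  have aK: "a \<in> K" using aP K_def by simp
  have reach: "\<And>u. (mg_adj E src tgt)\<^sup>*\<^sup>* w u \<Longrightarrow> u = v \<or> pos u \<in> K"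
  proof -
    fix u assume "(mg_adj E src tgt)\<^sup>*\<^sup>* w u"
    then show "u = v \<or> pos u \<in> K"
    proof (induction rule: rtranclp_induct)
      case base
      then show ?case using aK a_def by simp
    next
      case (step y z)
      obtain g where g: "g \<in> E" "(src g = y \<and> tgt g = z) \<or> (src g = z \<and> tgt g = y)"
        using step.hyps(2) unfolding mg_adj_def by blast
      show ?case
      proof (cases "z = v")
        case True then show ?thesis by simp
      next
        case zv: False
        have zV: "z \<in> V" using g srcV tgtV by auto
        have ge: "g \<noteq> e" using g zv v_def te by auto
        show ?thesis
        proof (cases "y = v")
          case True
          then have "g = f" using funi g ge by blast
          then have "z = w" using fends g True by blast
          then show ?thesis using aK a_def by simp
        next
          case yv: False
          then have yK: "pos y \<in> K" using step.IH by simp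
          have pzC: "pos z \<notin> C" using vertC zV zv by blast
          from g(2) show ?thesis
          proof
            assume h: "src g = y \<and> tgt g = z"
            have "crv g 1 \<in> connected_component_set P (pos (src g))"
              using L1[OF g(1) ge, of 1] st1[OF g(1)] h pzC yv by simp
            then show ?thesis using st1[OF g(1)] h yK K_def connected_component_eq by metis
          next
            assume h: "src g = z \<and> tgt g = y"
            have "crv g 0 \<in> connected_component_set P (pos (tgt g))"
              using L2[OF g(1) ge, of 0] st0[OF g(1)] h pzC yv by simp
            then show ?thesis using st0[OF g(1)] h yK K_def connected_component_eq by metis
          qed
        qed
      qed
    qed
  qed
  have vertK: "\<And>u. u \<in> V \<Longrightarrow> u \<noteq> v \<Longrightarrow> pos u \<in> K"
    using reach assms(2) wV unfolding mg_connected_def by blast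
  have PK: "P \<subseteq> K"
  proof
    fix p assume pP: "p \<in> P"
    then have pC: "p \<notin> C" using P_def by auto
    from pP consider (vert) u where "u \<in> V" "p = pos u"
      | (edge) g t where "g \<in> E" "t \<in> {0..1}" "p = crv g t"
      unfolding P_def drawing_def path_image_def by blast
    then show "p \<in> K"
    proof cases
      case vert
      then show ?thesis using vertK posvC pC by blast
    next
      case edge
      have ge: "g \<noteq> e" using edge pC unfolding C_def path_image_def by auto
      show ?thesis
      proof (cases "src g = v")
        case False
        have "p \<in> connected_component_set P (pos (src g))" using L1 edge ge pC False by blast
        moreover have "pos (src g) \<in> K" using vertK srcV edge(1) False by blast
        ultimately show ?thesis using K_def connected_component_eq by metis
      next
        case True
        then have tv: "tgt g \<noteq> v" using noloop edge(1) ge by blast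
        have "p \<in> connected_component_set P (pos (tgt g))" using L2 edge ge pC tv by blast
        moreover have "pos (tgt g) \<in> K" using vertK tgtV edge(1) tv by blast
        ultimately show ?thesis using K_def connected_component_eq by metis
      qed
    qed
  qed
  have cP: "connected P"
  proof -
    have "K \<subseteq> P" using K_def connected_component_subset by blast
    then have "P = K" using PK by blast
    then show ?thesis using K_def connected_connected_component by metis
  qed
  have sp: "simple_path (crv e)" using E1[OF assms(5)] assms(6) by simp
  have lp: "pathfinish (crv e) = pathstart (crv e)" using E1[OF assms(5)] assms(6) by simp
  have CS: "path_image (crv e) \<subseteq> S2" using E1[OF assms(5)] by simp
  have drS: "drawing V E pos crv \<subseteq> S2" using posS E1 unfolding drawing_def by blast
  have PS: "P \<subseteq> S2 - path_image (crv e)" using drS P_def C_def by auto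
  obtain D where D: "D \<in> components (S2 - path_image (crv e))" "D \<inter> P = {}"
    using jordan_part[OF sp lp CS PS cP aP] by blast
  have Cdr: "C \<subseteq> drawing V E pos crv" using assms(5) C_def unfolding drawing_def by blast
  have "D \<in> faces V E pos crv"
    unfolding faces_def in_components_maximal
  proof (intro conjI allI impI)
    show "D \<noteq> {}" "connected D" using D(1) in_components_maximal by blast+
    show DS: "D \<subseteq> S2 - drawing V E pos crv" using D in_components_subset P_def C_def by fastforce
    fix d assume d: "d \<noteq> {} \<and> D \<subseteq> d \<and> d \<subseteq> S2 - drawing V E pos crv \<and> connected d"
    then have "d \<subseteq> S2 - path_image (crv e)" using Cdr C_def by blast
    then show "d = D" using d D(1) in_components_maximal by blast
  qed
  then show ?thesis using D(1) by blast
qed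
end
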